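(* Let $G$ be a countable directed graph, let $v_{1},v_{2},v_{3},v_{4}$ be mutually distinct vertices of $G$, and let $a\in W^{*}(G)$ be a $D_{G}$-valued random variable. Then the $(v_{1},v_{2})$-off-diagonal compressed random variable ${}_{v_{1}}a_{v_{2}}=L_{v_{1}}aL_{v_{2}}$ and the $(v_{3},v_{4})$-off-diagonal compressed random variable ${}_{v_{3}}a_{v_{4}}=L_{v_{3}}aL_{v_{4}}$ are free over $D_{G}$ in $(W^{*}(G),E)$.
   Context: $G$ is a countable directed graph with vertex set $V(G)$; $\mathbb{F}^{+}(G)$ is its free semigroupoid (all vertices and admissible finite paths). On $H_{G}=l^{2}(\mathbb{F}^{+}(G))$ with orthonormal basis $\{\xi_{w}\}$, $L_{w}\xi_{h}=\xi_{wh}$ if $wh\in\mathbb{F}^{+}(G)$ and $0$ otherwise; $L_{w}^{*}$ is its adjoint; $L_v$ ($v\in V(G)$) are projections. $W^{*}(G)$ is the weak-operator closure of the $*$-algebra generated by all $L_{w},L_{w}^{*}$; $D_{G}$ is the von Neumann subalgebra generated by the $L_{v}$. Each $a\in W^{*}(G)$ has Fourier expansion $a=\sum_{w\in\mathbb{F}^{+}(G:a),u_{w}\in\{1,*\}}p_{w}L_{w}^{u_{w}}$ ($p_w\neq0$) with support $\mathbb{F}^{+}(G:a)$ and $V(G:a)=\mathbb{F}^{+}(G:a)\cap V(G)$. The conditional expectation $E:W^{*}(G)\to D_{G}$ is $E(a)=\sum_{v\in V(G:a)}p_{v}L_{v}$; "free over $D_G$" means free with amalgamation over $D_G$ with respect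 to $E$. *)

theory Defs
  imports "HOL-Analysis.Analysis" "HOL-Library.Countable_Set" "Graph_Theory.Digraph"
begin

text \<open>Elements of the free semigroupoid: vertices, and nonempty finite edge words.
  A word e1 e2 ... en is admissible if head(e_i) = tail(e_(i+1)); tail = source, head = range.\<close>

datatype ('v,'e) gpath = GV 'v | GE "'e list"

fun gsrc :: "('v,'e) pre_digraph \<Rightarrow> ('v,'e) gpath \<Rightarrow> 'v" where
  "gsrc G (GV v) = v"
| "gsrc G (GE es) = tail G (hd es)"

definition FP :: "('v,'e) pre_digraph \<Rightarrow> ('v,'e) gpath set" where
  "FP G = {GV v | v. v \<in> verts G} \<union>
          {GE es | es. es \<noteq> [] \<and> set es \<subseteq> arcs G \<and>
             (\<forall>i. Suc i < length es \<longrightarrow> head G (es ! i) = tail G (es ! Suc i))}"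

text \<open>Partial product of the free semigroupoid (None = the product is not defined, i.e. 0).\<close>
fun gmult :: "('v,'e) pre_digraph \<Rightarrow> ('v,'e) gpath \<Rightarrow> ('v,'e) gpath \<Rightarrow> ('v,'e) gpath option" where
  "gmult G (GV v) y = (if gsrc G y = v then Some y else None)"
| "gmult G (GE a) (GV u) = (if head G (last a) = u then Some (GE a) else None)"
| "gmult G (GE a) (GE b) = (if head G (last a) = tail G (hd b) then Some (GE (a @ b)) else None)"

type_synonym 'p vec = "'p \<Rightarrow> complex"
type_synonym 'p op = "'p vec \<Rightarrow> 'p vec"

definition ell2 :: "'p vec set" where
  "ell2 = {f. (\<lambda>x. (cmod (f x))\<^sup>2) summable_on UNIV}"

definition l2inner :: "'p vec \<Rightarrow> 'p vec \<Rightarrow> complex" where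
  "l2inner f g = (\<Sum>\<^sub>\<infinity>x. f x * cnj (g x))"

definition l2norm :: "'p vec \<Rightarrow> real" where
  "l2norm f = sqrt (\<Sum>\<^sub>\<infinity>x. (cmod (f x))\<^sup>2)"

definition basis :: "'p \<Rightarrow> 'p vec" where
  "basis k = (\<lambda>x. if x = k then 1 else 0)"

definition bounded_op :: "'p op \<Rightarrow> bool" where
  "bounded_op T \<longleftrightarrow>
     (\<forall>f\<in>ell2. T f \<in> ell2) \<and>
     (\<forall>f\<in>ell2. \<forall>g\<in>ell2. T (\<lambda>x. f x + g x) = (\<lambda>x. T f x + T g x)) \<and>
     (\<forall>f\<in>ell2. \<forall>c. T (\<lambda>x. c * f x) = (\<lambda>x. c * T f x)) \<and>
     (\<exists>C. \<forall>f\<in>ell2. l2norm (T f) \<le> C * l2norm f) \<and>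
     (\<forall>f. f \<notin> ell2 \<longrightarrow> T f = (\<lambda>x. 0))"

definition zero_op :: "'p op" where
  "zero_op = (\<lambda>f x. 0)"

definition add_op :: "'p op \<Rightarrow> 'p op \<Rightarrow> 'p op" where
  "add_op S T = (\<lambda>f x. S f x + T f x)"

definition smult_op :: "complex \<Rightarrow> 'p op \<Rightarrow> 'p op" where
  "smult_op c T = (\<lambda>f x. c * T f x)"

definition adj :: "'p op \<Rightarrow> 'p op" where
  "adj T = (THE S. bounded_op S \<and> (\<forall>f\<in>ell2. \<forall>g\<in>ell2. l2inner (T f) g = l2inner f (S g)))"

inductive_set star_alg :: "'p op set \<Rightarrow> 'p op set" for S where
  gen: "T \<in> S \<Longrightarrow> T \<in> star_alg S"
| add: "T1 \<in> star_alg S \<Longrightarrow> T2 \<in> star_alg S \<Longrightarrow> add_op T1 T2 \<in> star_alg S"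
| smult: "T \<in> star_alg S \<Longrightarrow> smult_op c T \<in> star_alg S"
| mult: "T1 \<in> star_alg S \<Longrightarrow> T2 \<in> star_alg S \<Longrightarrow> T1 \<circ> T2 \<in> star_alg S"
| star: "T \<in> star_alg S \<Longrightarrow> adj T \<in> star_alg S"

definition wot_closure :: "'p op set \<Rightarrow> 'p op set" where
  "wot_closure A = {T. bounded_op T \<and>
     (\<forall>F. finite F \<longrightarrow> F \<subseteq> ell2 \<times> ell2 \<longrightarrow> (\<forall>\<epsilon>>0. \<exists>S\<in>A.
        \<forall>(f,g)\<in>F. cmod (l2inner (T f) g - l2inner (S f) g) < \<epsilon>))}"

definition wstar_gen :: "'p op set \<Rightarrow> 'p op set" where
  "wstar_gen S = wot_closure (star_alg S)"

text \<open>Creation operators on H_G = l2(F+(G)) (realised inside l2 of all words, vanishing off F+(G)):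
  L_w xi_h = xi_(wh) if wh is defined and in F+(G), else 0.\<close>
definition Lop :: "('v,'e) pre_digraph \<Rightarrow> ('v,'e) gpath \<Rightarrow> ('v,'e) gpath op" where
  "Lop G w = (\<lambda>f. if f \<in> ell2 then
      (\<lambda>k. if k \<in> FP G \<and> (\<exists>h\<in>FP G. gmult G w h = Some k)
           then f (THE h. h \<in> FP G \<and> gmult G w h = Some k) else 0)
    else (\<lambda>k. 0))"

definition WG :: "('v,'e) pre_digraph \<Rightarrow> ('v,'e) gpath op set" where
  "WG G = wstar_gen {Lop G w | w. w \<in> FP G}"

definition DG :: "('v,'e) pre_digraph \<Rightarrow> ('v,'e) gpath op set" where
  "DG G = wstar_gen {Lop G (GV v) | v. v \<in> verts G}"

text \<open>Conditional expectation E(a) = sum over vertices v of p_v L_v, where the vertex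
  Fourier coefficient p_v of a is the (xi_v, xi_v)-entry of a. As an operator,
  E(a) xi_h = p_(src h) xi_h.\<close>
definition EG :: "('v,'e) pre_digraph \<Rightarrow> ('v,'e) gpath op \<Rightarrow> ('v,'e) gpath op" where
  "EG G a = (\<lambda>f. if f \<in> ell2 then
      (\<lambda>h. if h \<in> FP G then a (basis (GV (gsrc G h))) (GV (gsrc G h)) * f h else 0)
    else (\<lambda>h. 0))"

definition free_amalg :: "('p op \<Rightarrow> 'p op) \<Rightarrow> 'p op set \<Rightarrow> 'p op set \<Rightarrow> bool" where
  "free_amalg E A1 A2 \<longleftrightarrow>
     (\<forall>xs :: (bool \<times> 'p op) list.
        xs \<noteq> [] \<longrightarrow>
        (\<forall>i. Suc i < length xs \<longrightarrow> fst (xs ! i) \<noteq> fst (xs ! Suc i)) \<longrightarrow>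
        (\<forall>p\<in>set xs. snd p \<in> (if fst p then A1 else A2) \<and> E (snd p) = zero_op) \<longrightarrow>
        E (foldr (\<circ>) (map snd xs) id) = zero_op)"

definition free_over_DG :: "('v,'e) pre_digraph \<Rightarrow> ('v,'e) gpath op \<Rightarrow> ('v,'e) gpath op \<Rightarrow> bool" where
  "free_over_DG G x y \<longleftrightarrow>
     free_amalg (EG G) (wstar_gen (DG G \<union> {x})) (wstar_gen (DG G \<union> {y}))"

end

theory Submission
  imports Defs
begin


definition rs :: "'p set \<Rightarrow> 'p vec \<Rightarrow> 'p vec" where
  "rs A f = (\<lambda>x. if x \<in> A then f x else 0)"

definition N2 :: "'p vec \<Rightarrow> real" where
  "N2 f = (\<Sum>\<^sub>\<infinity>x. (cmod (f x))\<^sup>2)"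

lemma l2norm_N2: "l2norm f = sqrt (N2 f)" by (simp add: l2norm_def N2_def)

lemma N2_nonneg: "N2 f \<ge> 0" unfolding N2_def by (rule infsum_nonneg) simp

lemma ell2_zero[simp]: "(\<lambda>x. 0) \<in> ell2" by (simp add: ell2_def)

lemma ell2_finite_support:
  assumes "finite A" "\<And>x. x \<notin> A \<Longrightarrow> f x = 0" shows "f \<in> ell2"
proof -
  have "(\<lambda>x. (cmod (f x))\<^sup>2) summable_on A" using assms by simp
  moreover have "(\<lambda>x. (cmod (f x))\<^sup>2) summable_on A \<longleftrightarrow> (\<lambda>x. (cmod (f x))\<^sup>2) summable_on UNIV"
    by (rule summable_on_cong_neutral) (use assms in auto)
  ultimately show ?thesis by (simp add: ell2_def)
qed

lemma ell2_basis[simp]: "basis k \<in> ell2"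
  by (rule ell2_finite_support[of "{k}"]) (auto simp: basis_def)

lemma ell2_scale: "f \<in> ell2 \<Longrightarrow> (\<lambda>x. c * f x) \<in> ell2"
  unfolding ell2_def using summable_on_cmult_right[of "\<lambda>x. (cmod (f x))\<^sup>2" UNIV "(cmod c)\<^sup>2"]
  by (simp add: norm_mult power_mult_distrib)

lemma sq_add_le: "(cmod (a + b))\<^sup>2 \<le> 2 * (cmod a)\<^sup>2 + 2 * (cmod b)\<^sup>2"
proof -
  have "cmod (a+b) \<le> cmod a + cmod b" by (rule norm_triangle_ineq)
  hence "(cmod (a+b))\<^sup>2 \<le> (cmod a + cmod b)\<^sup>2" by (simp add: power_mono)
  also have "\<dots> \<le> 2 * (cmod a)\<^sup>2 + 2 * (cmod b)\<^sup>2"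
  proof -
    have "0 \<le> (cmod a - cmod b)\<^sup>2" by simp
    thus ?thesis by (simp add: power2_eq_square algebra_simps)
  qed
  finally show ?thesis .
qed

lemma ell2_add: assumes "f \<in> ell2" "g \<in> ell2" shows "(\<lambda>x. f x + g x) \<in> ell2"
proof -
  have "(\<lambda>x. 2 * (cmod (f x))\<^sup>2 + 2 * (cmod (g x))\<^sup>2) summable_on UNIV"
    using assms unfolding ell2_def by (intro summable_on_add summable_on_cmult_right) simp_all
  then show ?thesis unfolding ell2_def mem_Collect_eq
    by (rule summable_on_comparison_test) (auto simp: sq_add_le)
qed

lemma ell2_diff: assumes "f \<in> ell2" "g \<in> ell2" shows "(\<lambda>x. f x - g x) \<in> ell2"
  using ell2_add[OF assms(1) ell2_scale[OF assms(2), of "-1"]] by simp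

lemma ell2_rs: assumes "f \<in> ell2" shows "rs A f \<in> ell2"
  using assms unfolding ell2_def rs_def mem_Collect_eq
  by (rule summable_on_comparison_test) auto

lemma N2_rs_le: assumes "f \<in> ell2" shows "N2 (rs A f) \<le> N2 f"
  unfolding N2_def using assms ell2_rs[OF assms, of A]
  by (intro infsum_mono) (auto simp: ell2_def rs_def)

lemma ell2_sum: "finite F \<Longrightarrow> (\<And>i. i \<in> F \<Longrightarrow> u i \<in> ell2) \<Longrightarrow> (\<lambda>x. \<Sum>i\<in>F. u i x) \<in> ell2"
  by (induction F rule: finite_induct) (auto intro: ell2_add)

lemma N2_scale: "N2 (\<lambda>x. c * f x) = (cmod c)\<^sup>2 * N2 f"
  unfolding N2_def by (simp add: norm_mult power_mult_distrib infsum_cmult_right')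

lemma N2_add_le: assumes "f \<in> ell2" "g \<in> ell2" shows "N2 (\<lambda>x. f x + g x) \<le> 2 * N2 f + 2 * N2 g"
proof -
  have s: "(\<lambda>x. 2 * (cmod (f x))\<^sup>2 + 2 * (cmod (g x))\<^sup>2) summable_on UNIV"
    using assms unfolding ell2_def by (intro summable_on_add summable_on_cmult_right) simp_all
  have "N2 (\<lambda>x. f x + g x) \<le> (\<Sum>\<^sub>\<infinity>x. 2 * (cmod (f x))\<^sup>2 + 2 * (cmod (g x))\<^sup>2)"
    unfolding N2_def using ell2_add[OF assms] s by (intro infsum_mono) (auto simp: ell2_def sq_add_le)
  also have "\<dots> = 2 * N2 f + 2 * N2 g" unfolding N2_def
    using assms unfolding ell2_def
    by (subst infsum_add) (auto intro: summable_on_cmult_right simp: infsum_cmult_right')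
  finally show ?thesis .
qed

lemma pt_le_N2: assumes "f \<in> ell2" shows "(cmod (f k))\<^sup>2 \<le> N2 f"
proof -
  have "(\<Sum>\<^sub>\<infinity>x\<in>{k}. (cmod (f x))\<^sup>2) \<le> N2 f" unfolding N2_def
    using assms by (intro infsum_mono_neutral) (auto simp: ell2_def)
  thus ?thesis by simp
qed

lemma pt_le_l2norm: assumes "f \<in> ell2" shows "cmod (f k) \<le> l2norm f"
  unfolding l2norm_N2 using pt_le_N2[OF assms, of k] by (simp add: real_le_rsqrt)


lemma lin_summ: "f summable_on A \<Longrightarrow> g summable_on A \<Longrightarrow> (\<lambda>x. (a::real) * f x + b * g x) summable_on A"
  by (intro summable_on_add summable_on_cmult_right)

lemma lin_infsum: "f summable_on A \<Longrightarrow> g summable_on A \<Longrightarrow> (\<Sum>\<^sub>\<infinity>x\<in>A. (a::real) * f x + b * g x) = a * infsum f A + b * infsum g A"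
  by (simp add: infsum_add summable_on_cmult_right infsum_cmult_right')

lemma prod_abs_summable: assumes "f \<in> ell2" "g \<in> ell2"
  shows "(\<lambda>x. norm (f x * cnj (g x))) summable_on UNIV"
proof -
  have e: "(\<lambda>x. ((cmod (f x))\<^sup>2 + (cmod (g x))\<^sup>2)/2) = (\<lambda>x. (1/2) * (cmod (f x))\<^sup>2 + (1/2) * (cmod (g x))\<^sup>2)"
    by (rule ext) (simp add: field_simps)
  have s: "(\<lambda>x. ((cmod (f x))\<^sup>2 + (cmod (g x))\<^sup>2)/2) summable_on UNIV"
    unfolding e by (rule lin_summ) (use assms in \<open>auto simp: ell2_def\<close>)
  have "norm (f x * cnj (g x)) \<le> ((cmod (f x))\<^sup>2 + (cmod (g x))\<^sup>2)/2" for x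
  proof -
    have "0 \<le> (cmod (f x) - cmod (g x))\<^sup>2" by simp
    thus "norm (f x * cnj (g x)) \<le> ((cmod (f x))\<^sup>2 + (cmod (g x))\<^sup>2)/2"
      by (simp add: norm_mult power2_eq_square algebra_simps)
  qed
  then show ?thesis by (intro summable_on_comparison_test[OF s]) auto
qed

lemma prod_summable: "f \<in> ell2 \<Longrightarrow> g \<in> ell2 \<Longrightarrow> (\<lambda>x. f x * cnj (g x)) summable_on UNIV"
  by (rule abs_summable_summable[OF prod_abs_summable])

lemma l2inner_add_left: assumes "f \<in> ell2" "h \<in> ell2" "g \<in> ell2"
  shows "l2inner (\<lambda>x. f x + h x) g = l2inner f g + l2inner h g"
  unfolding l2inner_def using prod_summable[OF assms(1,3)] prod_summable[OF assms(2,3)]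
  by (simp add: distrib_right infsum_add)

lemma l2inner_add_right: assumes "f \<in> ell2" "g \<in> ell2" "h \<in> ell2"
  shows "l2inner f (\<lambda>x. g x + h x) = l2inner f g + l2inner f h"
  unfolding l2inner_def using prod_summable[OF assms(1,2)] prod_summable[OF assms(1,3)]
  by (simp add: distrib_left infsum_add)

lemma l2inner_scale_left: "l2inner (\<lambda>x. c * f x) g = c * l2inner f g"
  unfolding l2inner_def by (simp add: mult.assoc infsum_cmult_right')

lemma l2inner_scale_right: "l2inner f (\<lambda>x. c * g x) = cnj c * l2inner f g"
proof -
  have "(\<lambda>x. f x * cnj (c * g x)) = (\<lambda>x. cnj c * (f x * cnj (g x)))" by (rule ext) simp
  thus ?thesis unfolding l2inner_def by (simp add: infsum_cmult_right')
qed

lemma l2inner_cnj: "l2inner f g = cnj (l2inner g f)"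
  unfolding l2inner_def by (simp flip: infsum_cnj add: mult.commute)

lemma l2inner_basis_right[simp]: "l2inner u (basis k) = u k"
proof -
  have "l2inner u (basis k) = (\<Sum>\<^sub>\<infinity>x\<in>{k}. u x * cnj (basis k x))"
    unfolding l2inner_def by (rule infsum_cong_neutral) (auto simp: basis_def)
  thus ?thesis by (simp add: basis_def)
qed

lemma l2inner_basis_left[simp]: "l2inner (basis k) u = cnj (u k)"
  by (subst l2inner_cnj) simp

lemma real_cs_aux:
  fixes X A B :: real
  assumes "A \<ge> 0" "B \<ge> 0" "\<And>t. t > 0 \<Longrightarrow> X \<le> (t * A + B / t) / 2"
  shows "X \<le> sqrt A * sqrt B"
proof (cases "A > 0 \<and> B > 0")
  case True
  let ?t = "sqrt B / sqrt A"
  have "?t > 0" using True by simp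
  from assms(3)[OF this] have "X \<le> (?t * A + B / ?t) / 2" .
  have sA: "sqrt A > 0" "sqrt A * sqrt A = A" and sB: "sqrt B > 0" "sqrt B * sqrt B = B"
    using True by auto
  have g1: "b / a * (a * a) = a * b" if "a > 0" for a b :: real using that by (simp add: field_simps)
  have g2: "(b * b) / (b / a) = a * b" if "a > 0" "b > 0" for a b :: real using that by (simp add: field_simps)
  have "?t * A = sqrt A * sqrt B" using g1[OF sA(1), of "sqrt B"] sA(2) by simp
  moreover have "B / ?t = sqrt A * sqrt B" using g2[OF sA(1) sB(1)] sB(2) by simp
  ultimately have "(?t * A + B / ?t) / 2 = sqrt A * sqrt B" by simp
  with \<open>X \<le> (?t * A + B / ?t) / 2\<close> show ?thesis by simp
next
  case False
  show ?thesis
  proof (rule ccontr)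
    assume "\<not> X \<le> sqrt A * sqrt B"
    with False assms(1,2) have X: "X > 0" by auto
    show False
    proof (cases "A = 0")
      case True
      let ?t = "(B + 1) / X"
      have "?t > 0" using X assms by simp
      from assms(3)[OF this] True have "X \<le> B / ?t / 2" by simp
      also have "B / ?t = B * X / (B + 1)" using X assms by simp
      also have "B * X / (B + 1) / 2 < X"
      proof -
        have "B * X \<le> X * (B + 1)" using X by (simp add: algebra_simps)
        hence "B * X / (B + 1) \<le> X" using assms(2) by (simp add: pos_divide_le_eq)
        moreover have "Z \<le> X \<Longrightarrow> Z / 2 < X" for Z :: real using X by linarith
        ultimately show ?thesis by blast
      qed
      finally show False by simp
    next
      case False
      with \<open>\<not> (A > 0 \<and> B > 0)\<close> assms have B: "B = 0" "A > 0" by auto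
      let ?t = "X / A"
      have "?t > 0" using X B by simp
      from assms(3)[OF this] B have "X \<le> X / 2" by simp
      thus False using X by simp
    qed
  qed
qed

lemma cs_param: assumes "f \<in> ell2" "g \<in> ell2" "t > 0"
  shows "cmod (l2inner f g) \<le> (t * N2 f + N2 g / t) / 2"
proof -
  have e: "(\<lambda>x. (t * (cmod (f x))\<^sup>2 + (cmod (g x))\<^sup>2 / t) / 2) = (\<lambda>x. (t/2) * (cmod (f x))\<^sup>2 + (1/(2*t)) * (cmod (g x))\<^sup>2)"
    by (rule ext) (simp add: field_simps)
  have "cmod (l2inner f g) \<le> (\<Sum>\<^sub>\<infinity>x. norm (f x * cnj (g x)))"
    unfolding l2inner_def by (rule norm_infsum_bound[OF prod_abs_summable[OF assms(1,2)]])
  also have "\<dots> \<le> (\<Sum>\<^sub>\<infinity>x. (t * (cmod (f x))\<^sup>2 + (cmod (g x))\<^sup>2 / t) / 2)"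
  proof (rule infsum_mono)
    show "(\<lambda>x. norm (f x * cnj (g x))) summable_on UNIV"
      using prod_abs_summable[OF assms(1,2)] by simp
    show "(\<lambda>x. (t * (cmod (f x))\<^sup>2 + (cmod (g x))\<^sup>2 / t) / 2) summable_on UNIV"
      unfolding e by (rule lin_summ) (use assms in \<open>auto simp: ell2_def\<close>)
    fix x
    have "0 \<le> (t * cmod (f x) - cmod (g x))\<^sup>2 / t" using assms by simp
    hence "0 \<le> (t * (cmod (f x))\<^sup>2 + (cmod (g x))\<^sup>2 / t) - 2 * (cmod (f x) * cmod (g x))"
      using assms(3) by (simp add: power2_eq_square field_simps)
    thus "norm (f x * cnj (g x)) \<le> (t * (cmod (f x))\<^sup>2 + (cmod (g x))\<^sup>2 / t) / 2"
      by (simp add: norm_mult)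
  qed
  also have "\<dots> = (t/2) * N2 f + (1/(2*t)) * N2 g"
    unfolding e N2_def by (rule lin_infsum) (use assms in \<open>auto simp: ell2_def\<close>)
  also have "\<dots> = (t * N2 f + N2 g / t) / 2" by (simp add: field_simps)
  finally show ?thesis .
qed

lemma cs: assumes "f \<in> ell2" "g \<in> ell2"
  shows "cmod (l2inner f g) \<le> l2norm f * l2norm g"
  unfolding l2norm_N2 by (rule real_cs_aux[OF N2_nonneg N2_nonneg cs_param[OF assms]])


lemma bopD: assumes "bounded_op T"
  shows "\<forall>f\<in>ell2. T f \<in> ell2"
    and "\<forall>f\<in>ell2. \<forall>g\<in>ell2. T (\<lambda>x. f x + g x) = (\<lambda>x. T f x + T g x)"
    and "\<forall>f\<in>ell2. \<forall>c. T (\<lambda>x. c * f x) = (\<lambda>x. c * T f x)"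
    and "\<exists>C. \<forall>f\<in>ell2. l2norm (T f) \<le> C * l2norm f"
    and "\<forall>f. f \<notin> ell2 \<longrightarrow> T f = (\<lambda>x. 0)"
  using assms unfolding bounded_op_def by simp_all

lemma bopI: assumes "\<And>f. f \<in> ell2 \<Longrightarrow> T f \<in> ell2"
    "\<And>f g. f \<in> ell2 \<Longrightarrow> g \<in> ell2 \<Longrightarrow> T (\<lambda>x. f x + g x) = (\<lambda>x. T f x + T g x)"
    "\<And>f c. f \<in> ell2 \<Longrightarrow> T (\<lambda>x. c * f x) = (\<lambda>x. c * T f x)"
    "\<And>f. f \<in> ell2 \<Longrightarrow> l2norm (T f) \<le> C * l2norm f"
    "\<And>f. f \<notin> ell2 \<Longrightarrow> T f = (\<lambda>x. 0)"
  shows "bounded_op T"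
  unfolding bounded_op_def
proof (intro conjI)
  show "\<exists>C. \<forall>f\<in>ell2. l2norm (T f) \<le> C * l2norm f" using assms(4) by blast
qed (use assms in blast)+

lemma bop_add: "bounded_op T \<Longrightarrow> f \<in> ell2 \<Longrightarrow> g \<in> ell2 \<Longrightarrow> T (\<lambda>x. f x + g x) = (\<lambda>x. T f x + T g x)"
  using bopD(2) by blast

lemma bop_scale: "bounded_op T \<Longrightarrow> f \<in> ell2 \<Longrightarrow> T (\<lambda>x. c * f x) = (\<lambda>x. c * T f x)"
  using bopD(3) by blast

lemma bop_out: "bounded_op T \<Longrightarrow> f \<notin> ell2 \<Longrightarrow> T f = (\<lambda>x. 0)"
  using bopD(5) by blast

lemma bop_ell2: assumes "bounded_op T" shows "T f \<in> ell2"
proof (cases "f \<in> ell2")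
  case True thus ?thesis using bopD(1)[OF assms] by blast
next
  case False thus ?thesis using bop_out[OF assms False] by simp
qed

lemma bop_zero: assumes "bounded_op T" shows "T (\<lambda>x. 0) = (\<lambda>x. 0)"
  using bop_scale[OF assms ell2_zero, of 0] by simp

lemma bop_bound: assumes "bounded_op T"
  obtains C where "C \<ge> 0" "\<And>f. f \<in> ell2 \<Longrightarrow> l2norm (T f) \<le> C * l2norm f"
proof -
  obtain C where C: "\<And>f. f \<in> ell2 \<Longrightarrow> l2norm (T f) \<le> C * l2norm f"
    using bopD(4)[OF assms] by blast
  have "l2norm (T f) \<le> max C 0 * l2norm f" if "f \<in> ell2" for f
  proof -
    have "l2norm f \<ge> 0" by (simp add: l2norm_N2 N2_nonneg)
    hence "C * l2norm f \<le> max C 0 * l2norm f" by (simp add: mult_right_mono)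
    with C[OF that] show ?thesis by linarith
  qed
  thus ?thesis using that[of "max C 0"] by simp
qed

lemma bop_sum: assumes "bounded_op T" "finite F" "\<And>i. i \<in> F \<Longrightarrow> u i \<in> ell2"
  shows "T (\<lambda>x. \<Sum>i\<in>F. c i * u i x) = (\<lambda>x. \<Sum>i\<in>F. c i * T (u i) x)"
  using assms(2,3)
proof (induction F rule: finite_induct)
  case empty
  then show ?case using bop_zero[OF assms(1)] by simp
next
  case (insert a F)
  have s: "(\<lambda>x. \<Sum>i\<in>F. c i * u i x) \<in> ell2"
    using insert by (intro ell2_sum) (auto intro: ell2_scale)
  have "T (\<lambda>x. \<Sum>i\<in>insert a F. c i * u i x) = T (\<lambda>x. c a * u a x + (\<Sum>i\<in>F. c i * u i x))"
    using insert by simp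
  also have "\<dots> = (\<lambda>x. T (\<lambda>x. c a * u a x) x + T (\<lambda>x. \<Sum>i\<in>F. c i * u i x) x)"
    using insert s by (intro bop_add[OF assms(1)] ell2_scale) auto
  also have "\<dots> = (\<lambda>x. \<Sum>i\<in>insert a F. c i * T (u i) x)"
    using insert bop_scale[OF assms(1)] by simp
  finally show ?case .
qed

lemma rs_basis_sum: assumes "finite F" shows "rs F f = (\<lambda>x. \<Sum>h\<in>F. f h * basis h x)"
proof (rule ext)
  fix x
  have "(\<Sum>h\<in>F. f h * basis h x) = (\<Sum>h\<in>F. if x = h then f h else 0)"
    by (rule sum.cong) (auto simp: basis_def)
  also have "\<dots> = rs F f x" using assms by (simp add: rs_def)
  finally show "rs F f x = (\<Sum>h\<in>F. f h * basis h x)" by simp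
qed

lemma rs_split: "f = (\<lambda>x. rs (-F) f x + rs F f x)"
  by (rule ext) (simp add: rs_def)

lemma N2_tail: assumes "f \<in> ell2" "finite F"
  shows "N2 (rs (-F) f) = N2 f - (\<Sum>x\<in>F. (cmod (f x))\<^sup>2)"
proof -
  have s1: "(\<lambda>x. (cmod (rs (-F) f x))\<^sup>2) summable_on UNIV" using ell2_rs[OF assms(1)] by (simp add: ell2_def)
  have s2: "(\<lambda>x. (cmod (rs F f x))\<^sup>2) summable_on UNIV" using ell2_rs[OF assms(1)] by (simp add: ell2_def)
  have "N2 f = (\<Sum>\<^sub>\<infinity>x. (cmod (rs (-F) f x))\<^sup>2 + (cmod (rs F f x))\<^sup>2)"
    unfolding N2_def by (rule infsum_cong) (simp add: rs_def)
  also have "\<dots> = N2 (rs (-F) f) + N2 (rs F f)" unfolding N2_def using s1 s2 by (rule infsum_add)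
  also have "N2 (rs F f) = (\<Sum>\<^sub>\<infinity>x\<in>F. (cmod (f x))\<^sup>2)"
    unfolding N2_def by (rule infsum_cong_neutral) (auto simp: rs_def)
  also have "\<dots> = (\<Sum>x\<in>F. (cmod (f x))\<^sup>2)" using assms(2) by simp
  finally show ?thesis by simp
qed

lemma tail_small: assumes "f \<in> ell2" "e > 0"
  shows "\<forall>\<^sub>F F in finite_subsets_at_top UNIV. N2 (rs (-F) f) < e"
proof -
  have "((\<lambda>x. (cmod (f x))\<^sup>2) has_sum N2 f) UNIV"
    using assms(1) unfolding ell2_def N2_def by simp
  hence "((\<lambda>F. \<Sum>x\<in>F. (cmod (f x))\<^sup>2) \<longlongrightarrow> N2 f) (finite_subsets_at_top UNIV)"
    by (simp add: has_sum_def)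
  hence "\<forall>\<^sub>F F in finite_subsets_at_top UNIV. dist (\<Sum>x\<in>F. (cmod (f x))\<^sup>2) (N2 f) < e"
    using assms(2) by (rule tendstoD)
  moreover have "\<forall>\<^sub>F F in finite_subsets_at_top UNIV. finite F"
    by (simp add: eventually_finite_subsets_at_top_weakI)
  ultimately show ?thesis
    by eventually_elim (use assms(1) in \<open>auto simp: N2_tail dist_real_def\<close>)
qed

lemma l2norm_lt: "N2 f < e\<^sup>2 \<Longrightarrow> e > 0 \<Longrightarrow> l2norm f < e"
  unfolding l2norm_N2 using real_sqrt_less_iff[of "N2 f" "e\<^sup>2"] by simp

lemma MD: assumes T: "bounded_op T" and f: "f \<in> ell2"
  and z: "\<And>j. f j \<noteq> 0 \<Longrightarrow> T (basis j) k = 0"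
  shows "T f k = 0"
proof -
  obtain C where C: "C \<ge> 0" "\<And>f. f \<in> ell2 \<Longrightarrow> l2norm (T f) \<le> C * l2norm f"
    using bop_bound[OF T] by blast
  have "cmod (T f k) \<le> (C + 1) * e" if e: "e > 0" for e
  proof -
    have "\<forall>\<^sub>F F in finite_subsets_at_top UNIV. N2 (rs (-F) f) < e\<^sup>2 \<and> finite F"
      using tail_small[OF f, of "e\<^sup>2"] e
      by (auto intro: eventually_conj simp: eventually_finite_subsets_at_top_weakI)
    then obtain F where F: "finite F" "N2 (rs (-F) f) < e\<^sup>2"
      by (auto simp: eventually_finite_subsets_at_top)
    have "T f = T (\<lambda>x. rs (-F) f x + rs F f x)" using rs_split[of f F] by simp
    also have "\<dots> = (\<lambda>x. T (rs (-F) f) x + T (rs F f) x)"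
      by (rule bop_add[OF T ell2_rs[OF f] ell2_rs[OF f]])
    finally have 1: "T f k = T (rs (-F) f) k + T (rs F f) k" by simp
    have "T (rs F f) = (\<lambda>x. \<Sum>h\<in>F. f h * T (basis h) x)"
      unfolding rs_basis_sum[OF F(1)] by (rule bop_sum[OF T F(1)]) simp
    hence "T (rs F f) k = 0" using z by (auto intro!: sum.neutral) (metis z)
    with 1 have "cmod (T f k) = cmod (T (rs (-F) f) k)" by simp
    also have "\<dots> \<le> l2norm (T (rs (-F) f))" by (rule pt_le_l2norm[OF bop_ell2[OF T]])
    also have "\<dots> \<le> C * l2norm (rs (-F) f)" by (rule C(2)[OF ell2_rs[OF f]])
    also have "\<dots> \<le> C * e" using l2norm_lt[OF F(2) e] C(1) by (simp add: mult_left_mono)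
    also have "\<dots> \<le> (C + 1) * e" using e by simp
    finally show ?thesis .
  qed
  hence "cmod (T f k) \<le> 0"
  proof -
    assume h: "\<And>e. e > 0 \<Longrightarrow> cmod (T f k) \<le> (C + 1) * e"
    show ?thesis
    proof (rule ccontr)
      assume "\<not> cmod (T f k) \<le> 0"
      hence p: "cmod (T f k) > 0" by simp
      have "cmod (T f k) \<le> (C+1) * (cmod (T f k) / (2 * (C+1)))"
        using h[of "cmod (T f k) / (2 * (C+1))"] p C(1) by simp
      also have "\<dots> = cmod (T f k) / 2" using C(1) by (simp add: field_simps)
      finally show False using p by simp
    qed
  qed
  thus ?thesis by simp
qed


lemma N2_rs_finite: assumes "finite F" shows "N2 (rs F f) = (\<Sum>x\<in>F. (cmod (f x))\<^sup>2)"
proof -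
  have "N2 (rs F f) = (\<Sum>\<^sub>\<infinity>x\<in>F. (cmod (f x))\<^sup>2)"
    unfolding N2_def by (rule infsum_cong_neutral) (auto simp: rs_def)
  thus ?thesis using assms by simp
qed

lemma l2inner_sum_left: assumes "finite F" "\<And>i. i \<in> F \<Longrightarrow> u i \<in> ell2" "g \<in> ell2"
  shows "l2inner (\<lambda>x. \<Sum>i\<in>F. a i * u i x) g = (\<Sum>i\<in>F. a i * l2inner (u i) g)"
  using assms(1,2)
proof (induction F rule: finite_induct)
  case empty
  then show ?case by (simp add: l2inner_def)
next
  case (insert b F)
  have s: "(\<lambda>x. \<Sum>i\<in>F. a i * u i x) \<in> ell2"
    using insert by (intro ell2_sum) (auto intro: ell2_scale)
  have "l2inner (\<lambda>x. \<Sum>i\<in>insert b F. a i * u i x) g = l2inner (\<lambda>x. a b * u b x + (\<Sum>i\<in>F. a i * u i x)) g"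
    using insert by simp
  also have "\<dots> = l2inner (\<lambda>x. a b * u b x) g + l2inner (\<lambda>x. \<Sum>i\<in>F. a i * u i x) g"
    using insert s assms(3) by (intro l2inner_add_left ell2_scale) auto
  also have "\<dots> = (\<Sum>i\<in>insert b F. a i * l2inner (u i) g)"
    using insert by (simp add: l2inner_scale_left)
  finally show ?case .
qed

lemma small_eq: fixes X Y :: complex assumes "K \<ge> 0" "\<And>e. e > 0 \<Longrightarrow> cmod (X - Y) \<le> K * e"
  shows "X = Y"
proof (rule ccontr)
  assume "X \<noteq> Y"
  hence p: "cmod (X - Y) > 0" by simp
  have "cmod (X - Y) \<le> K * (cmod (X - Y) / (2 * (K + 1)))"
    using assms(2)[of "cmod (X - Y) / (2 * (K + 1))"] p assms(1) by simp
  also have "\<dots> < cmod (X - Y)"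
  proof -
    have h: "K * cmod (X - Y) \<ge> 0" using assms(1) by simp
    have "0 < K * cmod (X - Y) + 2 * cmod (X - Y)" using h p by linarith
    then show ?thesis using assms(1) by (simp add: field_simps)
  qed
  finally show False by simp
qed

definition adjS :: "'p op \<Rightarrow> 'p op" where
  "adjS T g = (\<lambda>y. if g \<in> ell2 then cnj (l2inner (T (basis y)) g) else 0)"

lemma adjS_N2: assumes T: "bounded_op T" and C: "C \<ge> 0" "\<And>f. f \<in> ell2 \<Longrightarrow> l2norm (T f) \<le> C * l2norm f"
  and g: "g \<in> ell2"
  shows "adjS T g \<in> ell2" "N2 (adjS T g) \<le> C\<^sup>2 * N2 g"
proof -
  define c where "c y = l2inner (T (basis y)) g" for y
  have fin: "(\<Sum>y\<in>F. (cmod (adjS T g y))\<^sup>2) \<le> C\<^sup>2 * N2 g" if F: "finite F" for F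
  proof -
    define s where "s = (\<Sum>y\<in>F. (cmod (c y))\<^sup>2)"
    have s0: "s \<ge> 0" unfolding s_def by (simp add: sum_nonneg)
    define fF where "fF = rs F (\<lambda>y. cnj (c y))"
    have fF: "fF = (\<lambda>x. \<Sum>y\<in>F. cnj (c y) * basis y x)" unfolding fF_def by (rule rs_basis_sum[OF F])
    have fFl: "fF \<in> ell2" unfolding fF_def by (rule ell2_finite_support[OF F]) (auto simp: rs_def)
    have "T fF = (\<lambda>x. \<Sum>y\<in>F. cnj (c y) * T (basis y) x)" unfolding fF by (rule bop_sum[OF T F]) simp
    hence "l2inner (T fF) g = (\<Sum>y\<in>F. cnj (c y) * l2inner (T (basis y)) g)"
      using l2inner_sum_left[OF F, of "\<lambda>y. T (basis y)" g "\<lambda>y. cnj (c y)"] g bop_ell2[OF T] by simp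
    also have "\<dots> = (\<Sum>y\<in>F. complex_of_real ((cmod (c y))\<^sup>2))"
    proof (rule sum.cong)
      fix y
      have "cnj z * z = complex_of_real ((cmod z)\<^sup>2)" for z
        by (metis complex_norm_square mult.commute)
      thus "cnj (c y) * l2inner (T (basis y)) g = complex_of_real ((cmod (c y))\<^sup>2)" unfolding c_def by simp
    qed simp
    also have "\<dots> = complex_of_real s" unfolding s_def by simp
    finally have "s = cmod (l2inner (T fF) g)" using s0 by simp
    also have "\<dots> \<le> l2norm (T fF) * l2norm g" by (rule cs[OF bop_ell2[OF T] g])
    also have "\<dots> \<le> C * l2norm fF * l2norm g"
      using C(2)[OF fFl] by (simp add: mult_right_mono l2norm_N2 N2_nonneg)
    also have "l2norm fF = sqrt s" unfolding l2norm_N2 fF_def N2_rs_finite[OF F] s_def by simp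
    finally have 1: "s \<le> C * sqrt s * sqrt (N2 g)" by (simp add: l2norm_N2)
    have "s \<le> C\<^sup>2 * N2 g"
    proof (cases "s = 0")
      case True thus ?thesis using N2_nonneg[of g] by simp
    next
      case False
      hence "sqrt s > 0" using s0 by simp
      have ss: "sqrt s * sqrt s = s" using s0 by simp
      have "sqrt s * sqrt s \<le> (C * sqrt (N2 g)) * sqrt s" using 1 ss by (simp add: mult_ac)
      hence "sqrt s \<le> C * sqrt (N2 g)" using \<open>sqrt s > 0\<close> by (rule mult_right_le_imp_le)
      hence "(sqrt s)\<^sup>2 \<le> (C * sqrt (N2 g))\<^sup>2" by (rule power_mono) (simp add: s0)
      thus ?thesis using s0 N2_nonneg[of g] by (simp add: power_mult_distrib)
    qed
    moreover have "(\<Sum>y\<in>F. (cmod (adjS T g y))\<^sup>2) = s" unfolding s_def adjS_def c_def using g by simp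
    ultimately show ?thesis by simp
  qed
  have sm: "(\<lambda>y. (cmod (adjS T g y))\<^sup>2) summable_on UNIV"
    by (rule nonneg_bdd_above_summable_on) (use fin in \<open>auto simp: bdd_above_def\<close>)
  thus "adjS T g \<in> ell2" by (simp add: ell2_def)
  show "N2 (adjS T g) \<le> C\<^sup>2 * N2 g" unfolding N2_def[of "adjS T g"] by (rule infsum_le_finite_sums[OF sm fin])
qed

lemma adjS_rel: assumes T: "bounded_op T" and f: "f \<in> ell2" and g: "g \<in> ell2"
  shows "l2inner (T f) g = l2inner f (adjS T g)"
proof -
  obtain C where C: "C \<ge> 0" "\<And>f. f \<in> ell2 \<Longrightarrow> l2norm (T f) \<le> C * l2norm f"
    using bop_bound[OF T] by blast
  define c where "c y = l2inner (T (basis y)) g" for y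
  have ag: "adjS T g \<in> ell2" using adjS_N2[OF T C g] by simp
  have eqY: "l2inner f (adjS T g) = (\<Sum>\<^sub>\<infinity>y. f y * c y)"
    unfolding l2inner_def adjS_def c_def using g by simp
  have sm: "(\<lambda>y. f y * c y) summable_on UNIV"
    using prod_summable[OF f ag] g unfolding adjS_def c_def by simp
  let ?Y = "(\<Sum>\<^sub>\<infinity>y. f y * c y)"
  have "cmod (l2inner (T f) g - ?Y) \<le> (C * l2norm g + 1) * e" if e: "e > 0" for e
  proof -
    have "((\<lambda>F. \<Sum>y\<in>F. f y * c y) \<longlongrightarrow> ?Y) (finite_subsets_at_top UNIV)"
      using has_sum_infsum[OF sm] by (simp add: has_sum_def)
    hence "\<forall>\<^sub>F F in finite_subsets_at_top UNIV. dist (\<Sum>y\<in>F. f y * c y) ?Y < e"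
      using e by (rule tendstoD)
    moreover have "\<forall>\<^sub>F F in finite_subsets_at_top UNIV. N2 (rs (-F) f) < e\<^sup>2"
      using tail_small[OF f, of "e\<^sup>2"] e by simp
    moreover have "\<forall>\<^sub>F F in finite_subsets_at_top UNIV. finite F"
      by (simp add: eventually_finite_subsets_at_top_weakI)
    ultimately have "\<forall>\<^sub>F F in finite_subsets_at_top UNIV. dist (\<Sum>y\<in>F. f y * c y) ?Y < e \<and> N2 (rs (-F) f) < e\<^sup>2 \<and> finite F"
      by eventually_elim auto
    then obtain F where F: "dist (\<Sum>y\<in>F. f y * c y) ?Y < e" "N2 (rs (-F) f) < e\<^sup>2" "finite F"
      by (auto simp: eventually_finite_subsets_at_top)
    have "T f = T (\<lambda>x. rs (-F) f x + rs F f x)" using rs_split[of f F] by simp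
    also have "\<dots> = (\<lambda>x. T (rs (-F) f) x + T (rs F f) x)"
      by (rule bop_add[OF T ell2_rs[OF f] ell2_rs[OF f]])
    finally have "l2inner (T f) g = l2inner (T (rs (-F) f)) g + l2inner (T (rs F f)) g"
      using l2inner_add_left[OF bop_ell2[OF T] bop_ell2[OF T] g] by simp
    moreover have "T (rs F f) = (\<lambda>x. \<Sum>h\<in>F. f h * T (basis h) x)"
      unfolding rs_basis_sum[OF F(3)] by (rule bop_sum[OF T F(3)]) simp
    hence "l2inner (T (rs F f)) g = (\<Sum>y\<in>F. f y * c y)"
      using l2inner_sum_left[OF F(3), of "\<lambda>y. T (basis y)" g f] g bop_ell2[OF T] unfolding c_def by simp
    ultimately have "l2inner (T f) g - ?Y = l2inner (T (rs (-F) f)) g + ((\<Sum>y\<in>F. f y * c y) - ?Y)"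
      by simp
    hence "cmod (l2inner (T f) g - ?Y) \<le> cmod (l2inner (T (rs (-F) f)) g) + cmod ((\<Sum>y\<in>F. f y * c y) - ?Y)"
      by (metis norm_triangle_ineq)
    also have "cmod ((\<Sum>y\<in>F. f y * c y) - ?Y) \<le> e" using F(1) by (simp add: dist_norm)
    also have "cmod (l2inner (T (rs (-F) f)) g) \<le> l2norm (T (rs (-F) f)) * l2norm g"
      by (rule cs[OF bop_ell2[OF T] g])
    also have "\<dots> \<le> C * e * l2norm g"
    proof -
      have "l2norm (T (rs (-F) f)) \<le> C * l2norm (rs (-F) f)" by (rule C(2)[OF ell2_rs[OF f]])
      also have "\<dots> \<le> C * e" using l2norm_lt[OF F(2) e] C(1) by (simp add: mult_left_mono)
      finally show ?thesis by (simp add: mult_right_mono l2norm_N2 N2_nonneg)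
    qed
    finally show ?thesis by (simp add: algebra_simps)
  qed
  hence "l2inner (T f) g = ?Y"
    by (intro small_eq[of "C * l2norm g + 1"]) (use C(1) in \<open>auto simp: l2norm_N2 N2_nonneg\<close>)
  thus ?thesis using eqY by simp
qed


lemma adjS_bop: assumes T: "bounded_op T" shows "bounded_op (adjS T)"
proof -
  obtain C where C: "C \<ge> 0" "\<And>f. f \<in> ell2 \<Longrightarrow> l2norm (T f) \<le> C * l2norm f"
    using bop_bound[OF T] by blast
  have b: "l2norm (adjS T g) \<le> C * l2norm g" if g: "g \<in> ell2" for g
  proof -
    have "l2norm (adjS T g) \<le> sqrt (C\<^sup>2 * N2 g)" unfolding l2norm_N2
      using adjS_N2(2)[OF T C g] by simp
    also have "\<dots> = C * l2norm g" using C(1) by (simp add: l2norm_N2 real_sqrt_mult)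
    finally show ?thesis .
  qed
  have a: "adjS T (\<lambda>x. f x + g x) = (\<lambda>x. adjS T f x + adjS T g x)" if "f \<in> ell2" "g \<in> ell2" for f g
    by (rule ext) (simp add: adjS_def ell2_add[OF that] l2inner_add_right[OF bop_ell2[OF T] that] that)
  have sc: "adjS T (\<lambda>x. c * f x) = (\<lambda>x. c * adjS T f x)" if "f \<in> ell2" for f c
    by (rule ext) (simp add: adjS_def ell2_scale[OF that] l2inner_scale_right that)
  have o: "adjS T f = (\<lambda>x. 0)" if "f \<notin> ell2" for f using that by (simp add: adjS_def)
  have e: "adjS T f \<in> ell2" if "f \<in> ell2" for f using adjS_N2(1)[OF T C that] .
  show ?thesis by (rule bopI[OF e a sc b o])
qed



lemma adj_eq: assumes T: "bounded_op T" shows "adj T = adjS T"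
  unfolding adj_def
proof (rule the_equality)
  show "bounded_op (adjS T) \<and> (\<forall>f\<in>ell2. \<forall>g\<in>ell2. l2inner (T f) g = l2inner f (adjS T g))"
    using adjS_bop[OF T] adjS_rel[OF T] by blast
  fix S assume S: "bounded_op S \<and> (\<forall>f\<in>ell2. \<forall>g\<in>ell2. l2inner (T f) g = l2inner f (S g))"
  show "S = adjS T"
  proof (rule ext)
    fix g
    show "S g = adjS T g"
    proof (cases "g \<in> ell2")
      case True
      show ?thesis
      proof (rule ext)
        fix k
        have "S g k = cnj (l2inner (basis k) (S g))" by simp
        also have "\<dots> = cnj (l2inner (T (basis k)) g)" using S True by simp
        finally show "S g k = adjS T g k" using True by (simp add: adjS_def)
      qed
    next
      case False
      then show ?thesis using S bop_out by (auto simp: adjS_def)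
    qed
  qed
qed

lemma adj_bop: "bounded_op T \<Longrightarrow> bounded_op (adj T)"
  by (simp add: adj_eq adjS_bop)

lemma adj_entry: "bounded_op T \<Longrightarrow> adj T (basis h) k = cnj (T (basis k) h)"
  by (simp add: adj_eq adjS_def)

lemma add_op_bop: assumes S: "bounded_op S" and T: "bounded_op T" shows "bounded_op (add_op S T)"
proof -
  obtain C1 where C1: "C1 \<ge> 0" "\<And>f. f \<in> ell2 \<Longrightarrow> l2norm (S f) \<le> C1 * l2norm f"
    using bop_bound[OF S] by blast
  obtain C2 where C2: "C2 \<ge> 0" "\<And>f. f \<in> ell2 \<Longrightarrow> l2norm (T f) \<le> C2 * l2norm f"
    using bop_bound[OF T] by blast
  have sqb: "N2 u \<le> C\<^sup>2 * N2 f" if "C \<ge> 0" "l2norm u \<le> C * l2norm f" for u f :: "'a vec" and C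
  proof -
    have "sqrt (N2 u) \<le> C * sqrt (N2 f)" using that by (simp add: l2norm_N2)
    hence "(sqrt (N2 u))\<^sup>2 \<le> (C * sqrt (N2 f))\<^sup>2" by (rule power_mono) (simp add: N2_nonneg)
    thus ?thesis using N2_nonneg[of u] N2_nonneg[of f] by (simp add: power_mult_distrib)
  qed
  have b: "l2norm (add_op S T f) \<le> (sqrt 2 * (C1 + C2)) * l2norm f" if f: "f \<in> ell2" for f
  proof -
    have "N2 (add_op S T f) \<le> 2 * N2 (S f) + 2 * N2 (T f)"
      unfolding add_op_def by (rule N2_add_le[OF bop_ell2[OF S] bop_ell2[OF T]])
    also have "\<dots> \<le> 2 * (C1\<^sup>2 * N2 f) + 2 * (C2\<^sup>2 * N2 f)"
      using sqb[OF C1(1) C1(2)[OF f]] sqb[OF C2(1) C2(2)[OF f]] by simp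
    also have "\<dots> \<le> 2 * (C1 + C2)\<^sup>2 * N2 f"
      using C1(1) C2(1) N2_nonneg[of f] by (simp add: power2_eq_square algebra_simps)
    finally have "sqrt (N2 (add_op S T f)) \<le> sqrt (2 * (C1 + C2)\<^sup>2 * N2 f)" by simp
    also have "\<dots> = sqrt 2 * (C1 + C2) * sqrt (N2 f)" using C1(1) C2(1) by (simp add: real_sqrt_mult)
    finally show ?thesis by (simp add: l2norm_N2)
  qed
  have e: "add_op S T f \<in> ell2" if "f \<in> ell2" for f
    unfolding add_op_def by (rule ell2_add[OF bop_ell2[OF S] bop_ell2[OF T]])
  have a: "add_op S T (\<lambda>x. f x + g x) = (\<lambda>x. add_op S T f x + add_op S T g x)" if "f \<in> ell2" "g \<in> ell2" for f g
    unfolding add_op_def using bop_add[OF S that] bop_add[OF T that] by (simp add: algebra_simps)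
  have sc: "add_op S T (\<lambda>x. c * f x) = (\<lambda>x. c * add_op S T f x)" if "f \<in> ell2" for f c
    unfolding add_op_def using bop_scale[OF S that] bop_scale[OF T that] by (simp add: algebra_simps)
  have o: "add_op S T f = (\<lambda>x. 0)" if "f \<notin> ell2" for f
    unfolding add_op_def using bop_out[OF S that] bop_out[OF T that] by simp
  show ?thesis by (rule bopI[OF e a sc b o])
qed

lemma smult_op_bop: assumes T: "bounded_op T" shows "bounded_op (smult_op c T)"
proof -
  obtain C where C: "C \<ge> 0" "\<And>f. f \<in> ell2 \<Longrightarrow> l2norm (T f) \<le> C * l2norm f"
    using bop_bound[OF T] by blast
  have b: "l2norm (smult_op c T f) \<le> (cmod c * C) * l2norm f" if f: "f \<in> ell2" for f
  proof -
    have "l2norm (smult_op c T f) = cmod c * l2norm (T f)"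
      unfolding smult_op_def l2norm_N2 N2_scale by (simp add: real_sqrt_mult)
    also have "\<dots> \<le> cmod c * (C * l2norm f)" using C(2)[OF f] by (simp add: mult_left_mono)
    finally show ?thesis by (simp add: mult_ac)
  qed
  have e: "smult_op c T f \<in> ell2" if "f \<in> ell2" for f
    unfolding smult_op_def by (rule ell2_scale[OF bop_ell2[OF T]])
  have a: "smult_op c T (\<lambda>x. f x + g x) = (\<lambda>x. smult_op c T f x + smult_op c T g x)" if "f \<in> ell2" "g \<in> ell2" for f g
    unfolding smult_op_def using bop_add[OF T that] by (simp add: algebra_simps)
  have sc: "smult_op c T (\<lambda>x. d * f x) = (\<lambda>x. d * smult_op c T f x)" if "f \<in> ell2" for f d
    unfolding smult_op_def using bop_scale[OF T that] by (simp add: algebra_simps)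
  have o: "smult_op c T f = (\<lambda>x. 0)" if "f \<notin> ell2" for f
    unfolding smult_op_def using bop_out[OF T that] by simp
  show ?thesis by (rule bopI[OF e a sc b o])
qed

lemma comp_bop: assumes S: "bounded_op S" and T: "bounded_op T" shows "bounded_op (S \<circ> T)"
proof -
  obtain C1 where C1: "C1 \<ge> 0" "\<And>f. f \<in> ell2 \<Longrightarrow> l2norm (S f) \<le> C1 * l2norm f"
    using bop_bound[OF S] by blast
  obtain C2 where C2: "C2 \<ge> 0" "\<And>f. f \<in> ell2 \<Longrightarrow> l2norm (T f) \<le> C2 * l2norm f"
    using bop_bound[OF T] by blast
  have b: "l2norm ((S \<circ> T) f) \<le> (C1 * C2) * l2norm f" if f: "f \<in> ell2" for f
  proof -
    have "l2norm ((S \<circ> T) f) \<le> C1 * l2norm (T f)" using C1(2)[OF bop_ell2[OF T]] by simp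
    also have "\<dots> \<le> C1 * (C2 * l2norm f)" using C2(2)[OF f] C1(1) by (simp add: mult_left_mono)
    finally show ?thesis by (simp add: mult_ac)
  qed
  have a: "(S \<circ> T) (\<lambda>x. f x + g x) = (\<lambda>x. (S \<circ> T) f x + (S \<circ> T) g x)" if "f \<in> ell2" "g \<in> ell2" for f g
    using that bop_add[OF T that] bop_add[OF S bop_ell2[OF T] bop_ell2[OF T]] by simp
  have sc: "(S \<circ> T) (\<lambda>x. c * f x) = (\<lambda>x. c * (S \<circ> T) f x)" if "f \<in> ell2" for f c
    using that bop_scale[OF T that] bop_scale[OF S bop_ell2[OF T]] by simp
  have o: "(S \<circ> T) f = (\<lambda>x. 0)" if "f \<notin> ell2" for f
    using that bop_out[OF T that] bop_zero[OF S] by simp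
  have e: "(S \<circ> T) f \<in> ell2" for f using bop_ell2[OF S] by simp
  show ?thesis by (rule bopI[OF e a sc b o])
qed



definition dgv :: "('v,'e) pre_digraph \<Rightarrow> ('v,'e) gpath op \<Rightarrow> ('v,'e) gpath \<Rightarrow> complex" where
  "dgv G T h = (if h \<in> FP G then T (basis (GV (gsrc G h))) (GV (gsrc G h)) else 0)"

definition Inv :: "('v,'e) pre_digraph \<Rightarrow> ('v,'e) gpath set \<Rightarrow> ('v,'e) gpath op \<Rightarrow> bool" where
  "Inv G S T \<longleftrightarrow> bounded_op T \<and>
     (\<forall>h k. h \<noteq> k \<and> \<not> (h \<in> S \<and> k \<in> S) \<longrightarrow> T (basis h) k = 0) \<and>
     (\<forall>h. h \<notin> S \<longrightarrow> T (basis h) h = dgv G T h)"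

definition good :: "('v,'e) pre_digraph \<Rightarrow> ('v,'e) gpath set \<Rightarrow> bool" where
  "good G S \<longleftrightarrow> (\<forall>h\<in>FP G. h \<notin> S \<longrightarrow> GV (gsrc G h) \<in> FP G \<and> GV (gsrc G h) \<notin> S)"

lemma GV_FP: "GV v \<in> FP G \<longleftrightarrow> v \<in> verts G"
  by (auto simp: FP_def)

lemma gsrc_FP: assumes "wf_digraph G" "h \<in> FP G" shows "gsrc G h \<in> verts G"
proof (cases h)
  case (GV v) thus ?thesis using assms by (auto simp: FP_def)
next
  case (GE es)
  with assms(2) have "es \<noteq> []" "set es \<subseteq> arcs G" by (auto simp: FP_def)
  hence "hd es \<in> arcs G" by auto
  thus ?thesis using GE wf_digraph.tail_in_verts[OF assms(1)] by simp
qed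

lemma good_region: assumes "wf_digraph G" shows "good G {h \<in> FP G. gsrc G h \<in> V}"
  unfolding good_def using gsrc_FP[OF assms] by (auto simp: GV_FP)

lemma dgv_GV: assumes "h \<in> FP G" "good G S" "h \<notin> S"
  shows "dgv G X (GV (gsrc G h)) = dgv G X h"
  using assms by (simp add: dgv_def good_def)

lemma InvD: assumes "Inv G S T"
  shows InvD_b: "bounded_op T"
    and InvD_off: "h \<noteq> k \<Longrightarrow> \<not> (h \<in> S \<and> k \<in> S) \<Longrightarrow> T (basis h) k = 0"
    and InvD_diag: "h \<notin> S \<Longrightarrow> T (basis h) h = dgv G T h"
  using assms unfolding Inv_def by simp_all

lemma Inv_basis_col: assumes "Inv G S U" "h \<notin> S"
  shows "U (basis h) = (\<lambda>k. U (basis h) h * basis h k)"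
proof (rule ext)
  fix k show "U (basis h) k = U (basis h) h * basis h k"
  proof (cases "k = h")
    case True
    have "basis h h = 1" by (simp add: basis_def)
    thus ?thesis using True by simp
  next
    case False
    have "U (basis h) k = 0" by (rule InvD_off[OF assms(1)]) (use False assms(2) in auto)
    moreover have "basis h k = 0" using False by (simp add: basis_def)
    ultimately show ?thesis by simp
  qed
qed

lemma Inv_comp_diag: assumes T: "Inv G S T" and U: "Inv G S U" and h: "h \<notin> S"
  shows "(T \<circ> U) (basis h) = (\<lambda>k. U (basis h) h * T (basis h) k)"
proof -
  have "(T \<circ> U) (basis h) = T (U (basis h))" by simp
  also have "U (basis h) = (\<lambda>k. U (basis h) h * basis h k)" by (rule Inv_basis_col[OF U h])
  also have "T (\<lambda>k. U (basis h) h * basis h k) = (\<lambda>k. U (basis h) h * T (basis h) k)"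
    by (rule bop_scale[OF InvD_b[OF T] ell2_basis])
  finally show ?thesis .
qed

lemma InvI: assumes "bounded_op T" "\<And>h k. h \<noteq> k \<Longrightarrow> \<not> (h \<in> S \<and> k \<in> S) \<Longrightarrow> T (basis h) k = 0"
  "\<And>h. h \<notin> S \<Longrightarrow> T (basis h) h = dgv G T h"
  shows "Inv G S T"
  unfolding Inv_def using assms by (intro conjI allI impI) auto

lemma Inv_comp: assumes T: "Inv G S T" and U: "Inv G S U" and g: "good G S"
  shows "Inv G S (T \<circ> U)"
proof -
  have bT: "bounded_op T" and bU: "bounded_op U" using InvD_b[OF T] InvD_b[OF U] .
  have off: "(T \<circ> U) (basis h) k = 0" if hk: "h \<noteq> k" "\<not> (h \<in> S \<and> k \<in> S)" for h k
  proof (cases "h \<in> S")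
    case False
    have "(T \<circ> U) (basis h) k = U (basis h) h * T (basis h) k" using Inv_comp_diag[OF T U False] by simp
    also have "T (basis h) k = 0" by (rule InvD_off[OF T hk])
    finally show ?thesis by simp
  next
    case True
    with hk have k: "k \<notin> S" by blast
    have "T (U (basis h)) k = 0"
    proof (rule MD[OF bT bop_ell2[OF bU]])
      fix j assume j0: "U (basis h) j \<noteq> 0"
      have "j \<in> S"
      proof (rule ccontr)
        assume jn: "j \<notin> S"
        have "h \<noteq> j" using True jn by blast
        hence "U (basis h) j = 0" by (rule InvD_off[OF U]) (use jn in blast)
        thus False using j0 by simp
      qed
      hence "j \<noteq> k" using k by blast
      thus "T (basis j) k = 0" by (rule InvD_off[OF T]) (use k in blast)
    qed
    thus ?thesis by simp
  qed
  have dg: "(T \<circ> U) (basis h) h = dgv G U h * dgv G T h" if h: "h \<notin> S" for h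
  proof -
    have "(T \<circ> U) (basis h) h = U (basis h) h * T (basis h) h" using Inv_comp_diag[OF T U h] by simp
    also have "T (basis h) h = dgv G T h" by (rule InvD_diag[OF T h])
    also have "U (basis h) h = dgv G U h" by (rule InvD_diag[OF U h])
    finally show ?thesis .
  qed
  have diag: "(T \<circ> U) (basis h) h = dgv G (T \<circ> U) h" if h: "h \<notin> S" for h
  proof (cases "h \<in> FP G")
    case True
    let ?v = "GV (gsrc G h)"
    have v: "?v \<in> FP G" "?v \<notin> S" using g True h by (auto simp: good_def)
    have "dgv G (T \<circ> U) h = (T \<circ> U) (basis ?v) ?v" using True by (simp add: dgv_def)
    also have "\<dots> = dgv G U ?v * dgv G T ?v" by (rule dg[OF v(2)])
    also have "\<dots> = dgv G U h * dgv G T h" using dgv_GV[OF True g h] by simp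
    finally show ?thesis using dg[OF h] by simp
  next
    case False
    thus ?thesis using dg[OF h] by (simp add: dgv_def)
  qed
  show ?thesis by (rule InvI[OF comp_bop[OF bT bU] off diag])
qed

lemma Inv_add: assumes T: "Inv G S T" and U: "Inv G S U" shows "Inv G S (add_op T U)"
proof (rule InvI)
  show "bounded_op (add_op T U)" by (rule add_op_bop[OF InvD_b[OF T] InvD_b[OF U]])
  fix h k assume hk: "h \<noteq> k" "\<not> (h \<in> S \<and> k \<in> S)"
  show "add_op T U (basis h) k = 0" using InvD_off[OF T hk] InvD_off[OF U hk] by (simp add: add_op_def)
next
  fix h assume h: "h \<notin> S"
  show "add_op T U (basis h) h = dgv G (add_op T U) h"
    using InvD_diag[OF T h] InvD_diag[OF U h] unfolding add_op_def dgv_def by (simp split: if_split)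
qed

lemma Inv_smult: assumes T: "Inv G S T" shows "Inv G S (smult_op c T)"
proof (rule InvI)
  show "bounded_op (smult_op c T)" by (rule smult_op_bop[OF InvD_b[OF T]])
  fix h k assume hk: "h \<noteq> k" "\<not> (h \<in> S \<and> k \<in> S)"
  show "smult_op c T (basis h) k = 0" using InvD_off[OF T hk] by (simp add: smult_op_def)
next
  fix h assume h: "h \<notin> S"
  show "smult_op c T (basis h) h = dgv G (smult_op c T) h"
    using InvD_diag[OF T h] unfolding smult_op_def dgv_def by (simp split: if_split)
qed

lemma Inv_adj: assumes T: "Inv G S T" shows "Inv G S (adj T)"
proof (rule InvI)
  have bT: "bounded_op T" by (rule InvD_b[OF T])
  show "bounded_op (adj T)" by (rule adj_bop[OF bT])
  fix h k assume hk: "h \<noteq> k" "\<not> (h \<in> S \<and> k \<in> S)"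
  have "T (basis k) h = 0" by (rule InvD_off[OF T]) (use hk in auto)
  thus "adj T (basis h) k = 0" by (simp add: adj_entry[OF bT])
next
  fix h assume h: "h \<notin> S"
  have bT: "bounded_op T" by (rule InvD_b[OF T])
  show "adj T (basis h) h = dgv G (adj T) h"
    using InvD_diag[OF T h] unfolding dgv_def by (simp add: adj_entry[OF bT] split: if_split)
qed

lemma Inv_star_alg: assumes "\<And>T. T \<in> Gs \<Longrightarrow> Inv G S T" "good G S" "T \<in> star_alg Gs"
  shows "Inv G S T"
  using assms(3)
proof (induction rule: star_alg.induct)
  case (gen T) thus ?case using assms(1) by blast
next
  case (add T1 T2) thus ?case using Inv_add by blast
next
  case (smult T c) thus ?case using Inv_smult by blast
next
  case (mult T1 T2) thus ?case using assms(2) Inv_comp by blast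
next
  case (star T) thus ?case using Inv_adj by blast
qed

lemma wotD: assumes "T \<in> wot_closure A" "finite F" "F \<subseteq> ell2 \<times> ell2" "e > 0"
  shows "\<exists>S\<in>A. \<forall>(f,g)\<in>F. cmod (l2inner (T f) g - l2inner (S f) g) < e"
proof -
  have "\<forall>F. finite F \<longrightarrow> F \<subseteq> ell2 \<times> ell2 \<longrightarrow> (\<forall>\<epsilon>>0. \<exists>S\<in>A.
        \<forall>(f,g)\<in>F. cmod (l2inner (T f) g - l2inner (S f) g) < \<epsilon>)"
    using assms(1) by (simp add: wot_closure_def)
  from this[rule_format, OF assms(2,3,4)] show ?thesis .
qed

lemma wot_zero: assumes "T \<in> wot_closure A" "\<And>S'. S' \<in> A \<Longrightarrow> S' (basis h) k = 0"
  shows "T (basis h) k = 0"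
proof -
  have "cmod (T (basis h) k) < e" if e: "e > 0" for e
  proof -
    have "finite {(basis h, basis k)}" "{(basis h, basis k)} \<subseteq> ell2 \<times> ell2" by auto
    from wotD[OF assms(1) this e] obtain S' where S': "S' \<in> A" "\<forall>(f,g)\<in>{(basis h, basis k)}. cmod (l2inner (T f) g - l2inner (S' f) g) < e"
      by blast
    thus ?thesis using assms(2)[OF S'(1)] by simp
  qed
  hence "cmod (T (basis h) k) \<le> 0 + e" if "e > 0" for e using that by (simp add: less_imp_le)
  hence "cmod (T (basis h) k) \<le> 0" by (rule field_le_epsilon)
  thus ?thesis by simp
qed

lemma wot_eq: assumes "T \<in> wot_closure A" "\<And>S'. S' \<in> A \<Longrightarrow> S' (basis h1) k1 = S' (basis h2) k2"
  shows "T (basis h1) k1 = T (basis h2) k2"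
proof (rule small_eq[of 2])
  fix e :: real assume e: "e > 0"
  obtain S' where S': "S' \<in> A" "\<forall>(f,g)\<in>{(basis h1, basis k1), (basis h2, basis k2)}.
      cmod (l2inner (T f) g - l2inner (S' f) g) < e"
  proof -
    have "finite {(basis h1, basis k1), (basis h2, basis k2)}"
      "{(basis h1, basis k1), (basis h2, basis k2)} \<subseteq> ell2 \<times> ell2" by auto
    from wotD[OF assms(1) this e] show ?thesis using that by blast
  qed
  hence a: "cmod (T (basis h1) k1 - S' (basis h1) k1) < e" and b: "cmod (T (basis h2) k2 - S' (basis h2) k2) < e"
    by auto
  have eq: "T (basis h1) k1 - T (basis h2) k2 = (T (basis h1) k1 - S' (basis h1) k1) - (T (basis h2) k2 - S' (basis h2) k2)"
    using assms(2)[OF S'(1)] by simp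
  have "cmod (T (basis h1) k1 - T (basis h2) k2) \<le> cmod (T (basis h1) k1 - S' (basis h1) k1) + cmod (T (basis h2) k2 - S' (basis h2) k2)"
    unfolding eq by (rule norm_triangle_ineq4)
  thus "cmod (T (basis h1) k1 - T (basis h2) k2) \<le> 2 * e" using a b by simp
qed simp

lemma Inv_wot: assumes "\<And>T. T \<in> A \<Longrightarrow> Inv G S T" "T \<in> wot_closure A"
  shows "Inv G S T"
proof -
  have b: "bounded_op T" using assms(2) by (simp add: wot_closure_def)
  have off: "T (basis h) k = 0" if hk: "h \<noteq> k" "\<not> (h \<in> S \<and> k \<in> S)" for h k
  proof (rule wot_zero[OF assms(2)])
    fix S' assume "S' \<in> A"
    hence "Inv G S S'" by (rule assms(1))
    thus "S' (basis h) k = 0" by (rule InvD_off[OF _ hk])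
  qed
  have diag: "T (basis h) h = dgv G T h" if h: "h \<notin> S" for h
  proof (cases "h \<in> FP G")
    case True
    have "T (basis h) h = T (basis (GV (gsrc G h))) (GV (gsrc G h))"
    proof (rule wot_eq[OF assms(2)])
      fix S' assume "S' \<in> A"
      hence "Inv G S S'" by (rule assms(1))
      hence "S' (basis h) h = dgv G S' h" by (rule InvD_diag[OF _ h])
      thus "S' (basis h) h = S' (basis (GV (gsrc G h))) (GV (gsrc G h))" using True by (simp add: dgv_def)
    qed
    thus ?thesis using True by (simp add: dgv_def)
  next
    case False
    have "T (basis h) h = 0"
    proof (rule wot_zero[OF assms(2)])
      fix S' assume "S' \<in> A"
      hence "Inv G S S'" by (rule assms(1))
      hence "S' (basis h) h = dgv G S' h" by (rule InvD_diag[OF _ h])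
      thus "S' (basis h) h = 0" using False by (simp add: dgv_def)
    qed
    thus ?thesis using False by (simp add: dgv_def)
  qed
  show ?thesis by (rule InvI[OF b off diag])
qed

lemma Inv_wstar: assumes "\<And>T. T \<in> Gs \<Longrightarrow> Inv G S T" "good G S" "T \<in> wstar_gen Gs"
  shows "Inv G S T"
  using assms(3) unfolding wstar_gen_def
  by (rule Inv_wot[rotated]) (rule Inv_star_alg[OF assms(1,2)])



lemma basis_apply: "basis h x = (if x = h then 1 else 0)" by (simp add: basis_def)

lemma Lop_GV: "Lop G (GV v) f = (if f \<in> ell2 then rs {k. k \<in> FP G \<and> gsrc G k = v} f else (\<lambda>k. 0))"
proof (cases "f \<in> ell2")
  case True
  have gm: "gmult G (GV v) h = Some k \<longleftrightarrow> h = k \<and> gsrc G k = v" for h k by auto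
  have th: "(THE h. h \<in> FP G \<and> gmult G (GV v) h = Some k) = k" if "k \<in> FP G" "gsrc G k = v" for k
    by (rule the_equality) (use that gm in auto)
  show ?thesis
  proof (rule ext)
    fix k
    have L: "Lop G (GV v) f k = (if k \<in> FP G \<and> (\<exists>h\<in>FP G. gmult G (GV v) h = Some k)
        then f (THE h. h \<in> FP G \<and> gmult G (GV v) h = Some k) else 0)"
      unfolding Lop_def using True by (simp del: gmult.simps)
    show "Lop G (GV v) f k = (if f \<in> ell2 then rs {k. k \<in> FP G \<and> gsrc G k = v} f else (\<lambda>k. 0)) k"
    proof (cases "k \<in> FP G \<and> gsrc G k = v")
      case c: True
      have ex: "\<exists>h\<in>FP G. gmult G (GV v) h = Some k" using c gm by blast
      show ?thesis using L ex c True th[of k] by (simp del: gmult.simps add: rs_def)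
    next
      case c: False
      have nex: "\<not> (k \<in> FP G \<and> (\<exists>h\<in>FP G. gmult G (GV v) h = Some k))" using c gm by blast
      have "Lop G (GV v) f k = 0" using L nex by (simp del: gmult.simps)
      moreover have "rs {k. k \<in> FP G \<and> gsrc G k = v} f k = 0" using c by (auto simp: rs_def)
      ultimately show ?thesis using True by simp
    qed
  qed
next
  case False thus ?thesis by (simp add: Lop_def)
qed

lemma Lop_bop: fixes G :: "('v,'e) pre_digraph" shows "bounded_op (Lop G (GV v))"
proof (rule bopI[of _ 1])
  let ?A = "{k. k \<in> FP G \<and> gsrc G k = v}"
  fix f :: "('v,'e) gpath vec"
  show "f \<in> ell2 \<Longrightarrow> Lop G (GV v) f \<in> ell2" by (simp add: Lop_GV ell2_rs)
  show "f \<notin> ell2 \<Longrightarrow> Lop G (GV v) f = (\<lambda>x. 0)" by (simp add: Lop_GV)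
  show "f \<in> ell2 \<Longrightarrow> l2norm (Lop G (GV v) f) \<le> 1 * l2norm f"
    by (simp add: Lop_GV l2norm_N2 N2_rs_le)
  fix c show "f \<in> ell2 \<Longrightarrow> Lop G (GV v) (\<lambda>x. c * f x) = (\<lambda>x. c * Lop G (GV v) f x)"
    by (rule ext) (simp add: Lop_GV ell2_scale rs_def)
next
  fix f g :: "('v,'e) gpath vec" assume "f \<in> ell2" "g \<in> ell2"
  thus "Lop G (GV v) (\<lambda>x. f x + g x) = (\<lambda>x. Lop G (GV v) f x + Lop G (GV v) g x)"
    by (intro ext) (simp add: Lop_GV ell2_add rs_def)
qed

lemma Lop_basis: "Lop G (GV v) (basis h) k = (if k \<in> FP G \<and> gsrc G k = v then basis h k else 0)"
  by (simp add: Lop_GV rs_def)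

lemma Inv_Lop: fixes G :: "('v,'e) pre_digraph" assumes wf: "wf_digraph G" shows "Inv G {} (Lop G (GV v))"
proof (rule InvI)
  show "bounded_op (Lop G (GV v))" by (rule Lop_bop)
  fix h k :: "('v,'e) gpath" assume "h \<noteq> k"
  thus "Lop G (GV v) (basis h) k = 0" by (simp add: Lop_basis basis_apply)
next
  fix h :: "('v,'e) gpath"
  show "Lop G (GV v) (basis h) h = dgv G (Lop G (GV v)) h"
  proof (cases "h \<in> FP G")
    case True
    have "GV (gsrc G h) \<in> FP G" using gsrc_FP[OF wf True] by (simp add: GV_FP)
    thus ?thesis using True by (simp add: Lop_basis dgv_def basis_apply)
  next
    case False thus ?thesis by (simp add: Lop_basis dgv_def)
  qed
qed

lemma good_empty: "wf_digraph G \<Longrightarrow> good G {}"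
  unfolding good_def using gsrc_FP by (auto simp: GV_FP)

lemma Inv_empty_mono: fixes G :: "('v,'e) pre_digraph" assumes "Inv G {} T" shows "Inv G S T"
proof (rule InvI)
  show "bounded_op T" by (rule InvD_b[OF assms])
  fix h k :: "('v,'e) gpath" assume "h \<noteq> k" thus "T (basis h) k = 0" by (rule InvD_off[OF assms]) simp
next
  fix h :: "('v,'e) gpath" show "T (basis h) h = dgv G T h" by (rule InvD_diag[OF assms]) simp
qed

lemma DG_Inv: assumes wf: "wf_digraph G" and T: "T \<in> DG G" shows "Inv G {} T"
  using T unfolding DG_def
proof (rule Inv_wstar[rotated 2])
  show "good G {}" by (rule good_empty[OF wf])
  fix U assume "U \<in> {Lop G (GV v) |v. v \<in> verts G}"
  thus "Inv G {} U" using Inv_Lop[OF wf] by blast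
qed

lemma X_entry: assumes a: "bounded_op a"
  and nz: "(Lop G (GV v1) \<circ> a \<circ> Lop G (GV v2)) (basis h) k \<noteq> 0"
  shows "h \<in> FP G \<and> gsrc G h = v2 \<and> k \<in> FP G \<and> gsrc G k = v1"
proof -
  have "h \<in> FP G \<and> gsrc G h = v2"
  proof (rule ccontr)
    assume n: "\<not> (h \<in> FP G \<and> gsrc G h = v2)"
    have "Lop G (GV v2) (basis h) = (\<lambda>x. 0)" by (rule ext) (use n in \<open>auto simp: Lop_basis basis_apply\<close>)
    hence "(Lop G (GV v1) \<circ> a \<circ> Lop G (GV v2)) (basis h) = (\<lambda>x. 0)"
      by (simp add: bop_zero[OF a] bop_zero[OF Lop_bop])
    thus False using nz by simp
  qed
  moreover have "k \<in> FP G \<and> gsrc G k = v1"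
  proof (rule ccontr)
    assume n: "\<not> (k \<in> FP G \<and> gsrc G k = v1)"
    have "Lop G (GV v1) u k = 0" for u using n by (auto simp: Lop_GV rs_def)
    thus False using nz by simp
  qed
  ultimately show ?thesis by blast
qed

lemma Inv_X: fixes G :: "('v,'e) pre_digraph" assumes wf: "wf_digraph G" and a: "bounded_op a"
  shows "Inv G {h \<in> FP G. gsrc G h \<in> {v1, v2}} (Lop G (GV v1) \<circ> a \<circ> Lop G (GV v2))"
    (is "Inv G ?S ?X")
proof (rule InvI)
  show "bounded_op ?X" by (intro comp_bop Lop_bop a)
  fix h k :: "('v,'e) gpath" assume hk: "\<not> (h \<in> ?S \<and> k \<in> ?S)"
  show "?X (basis h) k = 0"
  proof (rule ccontr)
    assume "?X (basis h) k \<noteq> 0"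
    from X_entry[OF a this] hk show False by auto
  qed
next
  fix h :: "('v,'e) gpath" assume h: "h \<notin> ?S"
  have z: "?X (basis h) h = 0"
  proof (rule ccontr)
    assume "?X (basis h) h \<noteq> 0"
    from X_entry[OF a this] h show False by auto
  qed
  have "dgv G ?X h = 0"
  proof (cases "h \<in> FP G")
    case True
    let ?v = "GV (gsrc G h)"
    have "?X (basis ?v) ?v = 0"
    proof (rule ccontr)
      assume "?X (basis ?v) ?v \<noteq> 0"
      from X_entry[OF a this] h True show False by auto
    qed
    thus ?thesis using True by (simp add: dgv_def)
  next
    case False thus ?thesis by (simp add: dgv_def)
  qed
  with z show "?X (basis h) h = dgv G ?X h" by simp
qed

lemma A_Inv: assumes wf: "wf_digraph G" and a: "bounded_op a"
  and T: "T \<in> wstar_gen (DG G \<union> {Lop G (GV v1) \<circ> a \<circ> Lop G (GV v2)})"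
  shows "Inv G {h \<in> FP G. gsrc G h \<in> {v1, v2}} T"
  using T
proof (rule Inv_wstar[rotated 2])
  show "good G {h \<in> FP G. gsrc G h \<in> {v1, v2}}" by (rule good_region[OF wf])
  fix U assume "U \<in> DG G \<union> {Lop G (GV v1) \<circ> a \<circ> Lop G (GV v2)}"
  thus "Inv G {h \<in> FP G. gsrc G h \<in> {v1, v2}} U"
    using Inv_X[OF wf a] DG_Inv[OF wf] Inv_empty_mono by blast
qed

lemma centred_entries: assumes T: "Inv G S T" and E: "EG G T = zero_op" and n: "\<not> (h \<in> S \<and> k \<in> S)"
  shows "T (basis h) k = 0"
proof (cases "h = k")
  case False thus ?thesis by (rule InvD_off[OF T _ n])
next
  case True
  hence hS: "h \<notin> S" using n by blast
  have "dgv G T h = 0"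
  proof (cases "h \<in> FP G")
    case c: True
    have "EG G T (basis h) h = zero_op (basis h) h" using E by simp
    thus ?thesis using c by (simp add: EG_def zero_op_def dgv_def basis_apply)
  next
    case False thus ?thesis by (simp add: dgv_def)
  qed
  thus ?thesis using InvD_diag[OF T hS] True by simp
qed

lemma centred_R: assumes T: "Inv G S T" and E: "EG G T = zero_op" and k: "k \<notin> S"
  shows "T u k = 0"
proof (cases "u \<in> ell2")
  case True
  show ?thesis by (rule MD[OF InvD_b[OF T] True]) (rule centred_entries[OF T E], use k in blast)
next
  case False thus ?thesis using bop_out[OF InvD_b[OF T] False] by simp
qed

lemma centred_K: assumes T: "Inv G S T" and E: "EG G T = zero_op" and u: "u \<in> ell2"
  and z: "\<And>j. j \<in> S \<Longrightarrow> u j = 0"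
  shows "T u = (\<lambda>x. 0)"
proof (rule ext)
  fix k show "T u k = 0"
  proof (rule MD[OF InvD_b[OF T] u])
    fix j assume "u j \<noteq> 0"
    hence "j \<notin> S" using z by blast
    thus "T (basis j) k = 0" by (intro centred_entries[OF T E]) blast
  qed
qed

lemma EG_zero: "EG G (\<lambda>f x. 0) = zero_op"
  by (auto simp: EG_def zero_op_def fun_eq_iff)



lemma wstar_bop: "T \<in> wstar_gen A \<Longrightarrow> bounded_op T"
  by (simp add: wstar_gen_def wot_closure_def)

theorem mainTheorem4:
  fixes G :: "('v,'e) pre_digraph"
    and v1 v2 v3 v4 :: 'v
    and a :: "('v,'e) gpath op"
  assumes "wf_digraph G"
    and "countable (verts G)" and "countable (arcs G)"
    and "v1 \<in> verts G" and "v2 \<in> verts G" and "v3 \<in> verts G" and "v4 \<in> verts G"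
    and "distinct [v1, v2, v3, v4]"
    and "a \<in> WG G"
  shows "free_over_DG G (Lop G (GV v1) \<circ> a \<circ> Lop G (GV v2))
                        (Lop G (GV v3) \<circ> a \<circ> Lop G (GV v4))"
proof -
  have wf: "wf_digraph G" by (rule assms(1))
  have ba: "bounded_op a" using assms(9) unfolding WG_def by (rule wstar_bop)
  define R where "R b = (if b then {h \<in> FP G. gsrc G h \<in> {v1, v2}} else {h \<in> FP G. gsrc G h \<in> {v3, v4}})" for b
  define A1 where "A1 = wstar_gen (DG G \<union> {Lop G (GV v1) \<circ> a \<circ> Lop G (GV v2)})"
  define A2 where "A2 = wstar_gen (DG G \<union> {Lop G (GV v3) \<circ> a \<circ> Lop G (GV v4)})"
  have invA: "Inv G (R b) T" if "T \<in> (if b then A1 else A2)" for b T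
  proof (cases b)
    case True thus ?thesis using that A_Inv[OF wf ba] unfolding R_def A1_def by simp
  next
    case False thus ?thesis using that A_Inv[OF wf ba] unfolding R_def A2_def by simp
  qed
  have disj: "R b \<inter> R c = {}" if "b \<noteq> c" for b c
    using that assms(8) unfolding R_def by auto
  show ?thesis
    unfolding free_over_DG_def free_amalg_def A1_def[symmetric] A2_def[symmetric]
  proof (intro allI impI)
    fix xs :: "(bool \<times> ('v,'e) gpath op) list"
    assume ne: "xs \<noteq> []"
      and alt: "\<forall>i. Suc i < length xs \<longrightarrow> fst (xs ! i) \<noteq> fst (xs ! Suc i)"
      and mem: "\<forall>p\<in>set xs. snd p \<in> (if fst p then A1 else A2) \<and> EG G (snd p) = zero_op"
    have key: "Inv G (R (fst p)) (snd p)" "EG G (snd p) = zero_op" if "p \<in> set xs" for p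
      using mem that invA by blast+
    show "EG G (foldr (\<circ>) (map snd xs) id) = zero_op"
    proof (cases xs)
      case Nil thus ?thesis using ne by simp
    next
      case (Cons p ys)
      show ?thesis
      proof (cases ys)
        case Nil
        thus ?thesis using key(2)[of p] Cons by simp
      next
        case (Cons q rest)
        note xs = \<open>xs = p # ys\<close> Cons
        have pq: "fst p \<noteq> fst q" using alt[rule_format, of 0] xs by simp
        have p: "Inv G (R (fst p)) (snd p)" "EG G (snd p) = zero_op" using key[of p] xs by auto
        have q: "Inv G (R (fst q)) (snd q)" "EG G (snd q) = zero_op" using key[of q] xs by auto
        define P where "P = foldr (\<circ>) (map snd rest) id"
        have "snd p \<circ> (snd q \<circ> P) = (\<lambda>f x. 0)"
        proof (rule ext)
          fix f
          let ?u = "snd q (P f)"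
          have u: "?u \<in> ell2" by (rule bop_ell2[OF InvD_b[OF q(1)]])
          have z: "?u j = 0" if "j \<in> R (fst p)" for j
          proof -
            have "j \<notin> R (fst q)" using that disj[OF pq] by blast
            thus ?thesis by (rule centred_R[OF q(1) q(2)])
          qed
          have "snd p ?u = (\<lambda>x. 0)" by (rule centred_K[OF p(1) p(2) u z])
          thus "(snd p \<circ> (snd q \<circ> P)) f = (\<lambda>x. 0)" by simp
        qed
        hence "foldr (\<circ>) (map snd xs) id = (\<lambda>f x. 0)" using xs unfolding P_def by simp
        thus ?thesis by (simp add: EG_zero)
      qed
    qed
  qed
qed

end
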